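(* Let $G=(V,E)$ be a connected bipartite graph with at least two edges and with vertex bipartition $V=X\cup Y$ (i.e. $X,Y$ independent sets partitioning $V$), and suppose $G$ is not a star $K_{1,m}$ whose center lies in $Y$. Then $G$ has a subgraph $H$ such that every vertex $y\in Y$ satisfies $d_H(y)\ge 1$, and every connected component of $H$ is either a star $K_{1,m}$ with $m\ge2$ whose center lies in $X$, or a subdivided star obtained from $K_{1,m}$ with $m\ge 2$ by subdividing each edge exactly once, whose center (the vertex of degree $m$) lies in $Y$.
   Context: A star $K_{1,m}$ has center its vertex of degree $m$. A subdivided star arises from a star by replacing every edge with a path of length $2$; its center is the center of the original star. *)

theory Defs
  imports Main
begin

definition graph :: "'a set \<Rightarrow> 'a set set \<Rightarrow> bool" where
  "graph V E \<longleftrightarrow> finite V \<and> (\<forall>e\<in>E. \<exists>u v. u \<noteq> v \<and> u \<in> V \<and> v \<in> V \<and> e = {u, v})"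

definition adj :: "'a set set \<Rightarrow> 'a \<Rightarrow> 'a \<Rightarrow> bool" where
  "adj E u v \<longleftrightarrow> {u, v} \<in> E"

definition reachable :: "'a set set \<Rightarrow> 'a \<Rightarrow> 'a \<Rightarrow> bool" where
  "reachable E u v \<longleftrightarrow> (adj E)\<^sup>*\<^sup>* u v"

definition connected_graph :: "'a set \<Rightarrow> 'a set set \<Rightarrow> bool" where
  "connected_graph V E \<longleftrightarrow> graph V E \<and> V \<noteq> {} \<and> (\<forall>u\<in>V. \<forall>v\<in>V. reachable E u v)"

definition bipartition :: "'a set \<Rightarrow> 'a set set \<Rightarrow> 'a set \<Rightarrow> 'a set \<Rightarrow> bool" where
  "bipartition V E X Y \<longleftrightarrow> X \<union> Y = V \<and> X \<inter> Y = {} \<and>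
     (\<forall>e\<in>E. \<forall>u\<in>e. \<forall>v\<in>e. u \<noteq> v \<longrightarrow> \<not> (u \<in> X \<and> v \<in> X) \<and> \<not> (u \<in> Y \<and> v \<in> Y))"

definition subgraph :: "'a set \<Rightarrow> 'a set set \<Rightarrow> 'a set \<Rightarrow> 'a set set \<Rightarrow> bool" where
  "subgraph VH EH V E \<longleftrightarrow> VH \<subseteq> V \<and> EH \<subseteq> E \<and> (\<forall>e\<in>EH. e \<subseteq> VH)"

definition degree :: "'a set set \<Rightarrow> 'a \<Rightarrow> nat" where
  "degree E v = card {e \<in> E. v \<in> e}"

definition comp_verts :: "'a set \<Rightarrow> 'a set set \<Rightarrow> 'a \<Rightarrow> 'a set" where
  "comp_verts V E v = {w \<in> V. reachable E v w}"

definition comp_edges :: "'a set \<Rightarrow> 'a set set \<Rightarrow> 'a \<Rightarrow> 'a set set" where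
  "comp_edges V E v = {e \<in> E. e \<subseteq> comp_verts V E v}"

definition star_with_center :: "'a set \<Rightarrow> 'a set set \<Rightarrow> 'a \<Rightarrow> nat \<Rightarrow> bool" where
  "star_with_center C EC c m \<longleftrightarrow> finite C \<and> c \<in> C \<and> card C = m + 1 \<and>
     EC = {{c, v} | v. v \<in> C - {c}}"

text \<open>(C, EC) is K_{1,m} with every edge subdivided once: center c, subdivision
  vertices S (|S| = m), each s in S joined to c and to its own leaf f s.\<close>
definition subdivided_star_with_center :: "'a set \<Rightarrow> 'a set set \<Rightarrow> 'a \<Rightarrow> nat \<Rightarrow> bool" where
  "subdivided_star_with_center C EC c m \<longleftrightarrow>
     (\<exists>S f. finite S \<and> card S = m \<and> c \<notin> S \<and> inj_on f S \<and> f ` S \<inter> (S \<union> {c}) = {} \<and>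
        C = {c} \<union> S \<union> f ` S \<and>
        EC = {{c, s} | s. s \<in> S} \<union> {{s, f s} | s. s \<in> S})"

end

theory Submission
  imports Defs
begin

datatype 'a piece = XS 'a "'a set" | SS 'a "'a set" "'a \<Rightarrow> 'a"

fun pv :: "'a piece \<Rightarrow> 'a set" where
  "pv (XS x L) = insert x L"
| "pv (SS c S f) = insert c (S \<union> f ` S)"

fun pe :: "'a piece \<Rightarrow> 'a set set" where
  "pe (XS x L) = {{x,l} | l. l \<in> L}"
| "pe (SS c S f) = {{c,s} | s. s \<in> S} \<union> {{s, f s} | s. s \<in> S}"

fun cen :: "'a piece \<Rightarrow> 'a" where
  "cen (XS x L) = x"
| "cen (SS c S f) = c"

fun ok :: "'a set set \<Rightarrow> 'a set \<Rightarrow> 'a set \<Rightarrow> 'a piece \<Rightarrow> bool" where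
  "ok E X Y (XS x L) \<longleftrightarrow> x \<in> X \<and> L \<subseteq> Y \<and> L \<noteq> {} \<and> finite L \<and> (\<forall>l\<in>L. {x,l} \<in> E)"
| "ok E X Y (SS c S f) \<longleftrightarrow> c \<in> Y \<and> S \<subseteq> X \<and> S \<noteq> {} \<and> finite S \<and> inj_on f S \<and>
      f ` S \<subseteq> Y \<and> c \<notin> f ` S \<and> (\<forall>s\<in>S. {c,s} \<in> E \<and> {s, f s} \<in> E)"

fun bad :: "'a piece \<Rightarrow> bool" where
  "bad (XS x L) = (card L = 1)"
| "bad (SS c S f) = False"

definition config :: "'a set set \<Rightarrow> 'a set \<Rightarrow> 'a set \<Rightarrow> 'a piece set \<Rightarrow> bool" where
  "config E X Y P \<longleftrightarrow> finite P \<and> (\<forall>p\<in>P. ok E X Y p) \<and>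
     (\<forall>p\<in>P. \<forall>q\<in>P. p \<noteq> q \<longrightarrow> pv p \<inter> pv q = {}) \<and> Y \<subseteq> \<Union>(pv ` P)"

definition nbad :: "'a piece set \<Rightarrow> nat" where
  "nbad P = card {p\<in>P. bad p}"

lemma reach_sym: "reachable E a b \<Longrightarrow> reachable E b a"
  unfolding reachable_def
proof (induction rule: rtranclp_induct)
  case base then show ?case by simp
next
  case (step y z)
  have "adj E z y" using step(2) by (simp add: adj_def insert_commute)
  then show ?case using step(3) by (meson converse_rtranclp_into_rtranclp)
qed

lemma reach_mono: "reachable E a b \<Longrightarrow> E \<subseteq> E' \<Longrightarrow> reachable E' a b"
  unfolding reachable_def
  by (metis (no_types, lifting) adj_def mono_rtranclp subsetD)

lemma reach_step: "reachable E a b \<Longrightarrow> {b,c} \<in> E \<Longrightarrow> reachable E a c"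
  unfolding reachable_def adj_def by (simp add: rtranclp.rtrancl_into_rtrancl)

lemma piece_conn: "u \<in> pv p \<Longrightarrow> reachable (pe p) (cen p) u"
proof (cases p)
  case (XS x L)
  assume u: "u \<in> pv p"
  show ?thesis
  proof (cases "u = x")
    case False then have "u \<in> L" using XS u by simp
    then have "adj (pe p) x u" using XS by (auto simp: adj_def)
    then show ?thesis using XS by (simp add: reachable_def r_into_rtranclp)
  qed (simp add: reachable_def XS)
next
  case (SS c S f)
  assume u: "u \<in> pv p"
  show ?thesis
  proof -
    have 1: "reachable (pe p) c s" if "s \<in> S" for s
    proof -
      have "adj (pe p) c s" using SS that by (auto simp: adj_def)
      then show ?thesis by (simp add: reachable_def r_into_rtranclp)
    qed
    have "reachable (pe p) c (f s)" if "s \<in> S" for s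
      using reach_step[OF 1[OF that], of "f s"] SS that by auto
    then show ?thesis using 1 u SS by (auto simp: reachable_def)
  qed
qed

lemma pe_sub: "e \<in> pe p \<Longrightarrow> e \<subseteq> pv p \<and> e \<noteq> {}"
  by (cases p) auto

lemma comp_lemma:
  assumes disj: "\<forall>p\<in>P. \<forall>q\<in>P. p \<noteq> q \<longrightarrow> pv p \<inter> pv q = {}"
    and pP: "p \<in> P" and v: "v \<in> pv p"
  shows "comp_verts (\<Union>(pv`P)) (\<Union>(pe`P)) v = pv p"
    and "comp_edges (\<Union>(pv`P)) (\<Union>(pe`P)) v = pe p"
proof -
  let ?EH = "\<Union>(pe`P)"
  have sub: "pe p \<subseteq> ?EH" using pP by auto
  have r1: "reachable ?EH v w" if "w \<in> pv p" for w
  proof -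
    have "reachable ?EH (cen p) w" using reach_mono[OF piece_conn[OF that] sub] .
    moreover have "reachable ?EH v (cen p)" using reach_sym[OF reach_mono[OF piece_conn[OF v] sub]] .
    ultimately show ?thesis unfolding reachable_def by (meson rtranclp_trans)
  qed
  have r2: "w \<in> pv p" if "reachable ?EH v w" for w
    using that unfolding reachable_def
  proof (induction rule: rtranclp_induct)
    case base then show ?case using v by simp
  next
    case (step a b)
    from step(2) obtain q where q: "q \<in> P" "{a,b} \<in> pe q" unfolding adj_def by auto
    have "{a,b} \<subseteq> pv q" using pe_sub[OF q(2)] by simp
    then have "q = p" using disj q(1) pP step(3) by blast
    then show ?case using \<open>{a,b} \<subseteq> pv q\<close> by simp
  qed
  show C: "comp_verts (\<Union>(pv`P)) ?EH v = pv p"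
    unfolding comp_verts_def using r1 r2 pP by blast
  show "comp_edges (\<Union>(pv`P)) ?EH v = pe p"
    unfolding comp_edges_def C
  proof safe
    fix e q assume e: "e \<in> pe q" "q \<in> P" "e \<subseteq> pv p"
    have "e \<subseteq> pv q" "e \<noteq> {}" using pe_sub[OF e(1)] by auto
    then have "q = p" using disj e pP by blast
    then show "e \<in> pe p" using e by simp
  next
    fix e assume "e \<in> pe p" then show "e \<in> ?EH" using pP by auto
  next
    fix e x assume "e \<in> pe p" "x \<in> e" then show "x \<in> pv p" using pe_sub by blast
  qed
qed


lemma graph_facts:
  assumes "graph V E" "bipartition V E X Y"
  shows "finite V" "finite E" "X \<subseteq> V" "Y \<subseteq> V" "X \<inter> Y = {}"
proof -
  show fV: "finite V" using assms(1) by (simp add: graph_def)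
  have "E \<subseteq> Pow V" using assms(1) by (auto simp: graph_def)
  then show "finite E" using fV by (meson finite_Pow_iff finite_subset)
  show "X \<subseteq> V" "Y \<subseteq> V" "X \<inter> Y = {}" using assms(2) by (auto simp: bipartition_def)
qed

lemma edge_XY:
  assumes "graph V E" "bipartition V E X Y" "{a,b} \<in> E"
  shows "a \<in> V" "b \<in> V" "a \<noteq> b" "a \<in> X \<Longrightarrow> b \<in> Y" "a \<in> Y \<Longrightarrow> b \<in> X"
    "a \<in> X \<Longrightarrow> b \<notin> X" "a \<in> Y \<Longrightarrow> b \<notin> Y"
proof -
  from assms(1) have "\<forall>e\<in>E. \<exists>u v. u \<noteq> v \<and> u \<in> V \<and> v \<in> V \<and> e = {u, v}"
    by (simp add: graph_def)
  then have "\<exists>u v. u \<noteq> v \<and> u \<in> V \<and> v \<in> V \<and> {a,b} = {u, v}" using assms(3) by (rule bspec)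
  then obtain u v where uv: "u \<noteq> v" "u \<in> V" "v \<in> V" "{a,b} = {u,v}" by blast
  have "a \<in> {u,v}" "b \<in> {u,v}" using uv(4) by (metis insertI1 insert_commute)+
  then show "a \<in> V" "b \<in> V" using uv by auto
  show ab: "a \<noteq> b" using uv by (metis doubleton_eq_iff)
  from assms(2) have H: "\<forall>e\<in>E. \<forall>u\<in>e. \<forall>v\<in>e. u \<noteq> v \<longrightarrow> \<not> (u \<in> X \<and> v \<in> X) \<and> \<not> (u \<in> Y \<and> v \<in> Y)"
    and XYV: "X \<union> Y = V" by (simp_all add: bipartition_def)
  have "\<forall>u\<in>{a,b}. \<forall>v\<in>{a,b}. u \<noteq> v \<longrightarrow> \<not> (u \<in> X \<and> v \<in> X) \<and> \<not> (u \<in> Y \<and> v \<in> Y)"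
    using H assms(3) by (rule bspec)
  then have bp: "\<not> (a \<in> X \<and> b \<in> X)" "\<not> (a \<in> Y \<and> b \<in> Y)"
    using ab by auto
  show "a \<in> X \<Longrightarrow> b \<in> Y" "a \<in> Y \<Longrightarrow> b \<in> X" "a \<in> X \<Longrightarrow> b \<notin> X" "a \<in> Y \<Longrightarrow> b \<notin> Y"
    using bp \<open>b \<in> V\<close> XYV by auto
qed

lemma final:
  assumes g: "graph V E" and bp: "bipartition V E X Y" and c: "config E X Y P" and nb: "nbad P = 0"
  shows "\<exists>VH EH. subgraph VH EH V E \<and>
           (\<forall>y\<in>Y. degree EH y \<ge> 1) \<and>
           (\<forall>v\<in>VH.
              (\<exists>c\<in>X. \<exists>m\<ge>2. star_with_center (comp_verts VH EH v) (comp_edges VH EH v) c m) \<or>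
              (\<exists>c\<in>Y. \<exists>m\<ge>2. subdivided_star_with_center (comp_verts VH EH v) (comp_edges VH EH v) c m))"
proof (intro exI conjI)
  note gf = graph_facts[OF g bp]
  have fP: "finite P" and okP: "\<forall>p\<in>P. ok E X Y p"
    and disj: "\<forall>p\<in>P. \<forall>q\<in>P. p \<noteq> q \<longrightarrow> pv p \<inter> pv q = {}" and cov: "Y \<subseteq> \<Union>(pv ` P)"
    using c by (auto simp: config_def)
  have nobad: "\<not> bad p" if "p \<in> P" for p
    using nb fP that unfolding nbad_def by auto
  let ?VH = "\<Union>(pv`P)" and ?EH = "\<Union>(pe`P)"
  have pvV: "pv p \<subseteq> V" if "ok E X Y p" for p
    using that gf by (cases p) auto
  have peE: "pe p \<subseteq> E" if "ok E X Y p" for p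
    using that by (cases p) auto
  show "subgraph ?VH ?EH V E"
    unfolding subgraph_def
  proof (intro conjI ballI)
    show "?VH \<subseteq> V" using pvV okP by blast
    show "?EH \<subseteq> E" using peE okP by blast
    fix e assume "e \<in> ?EH"
    then obtain p where "p \<in> P" "e \<in> pe p" by auto
    then show "e \<subseteq> ?VH" using pe_sub by blast
  qed
  show "\<forall>y\<in>Y. degree ?EH y \<ge> 1"
  proof
    fix y assume y: "y \<in> Y"
    then obtain p where p: "p \<in> P" "y \<in> pv p" using cov by auto
    have o: "ok E X Y p" using okP p by auto
    have "\<exists>e\<in>pe p. y \<in> e"
    proof (cases p)
      case (XS x L)
      have "y \<in> L" using XS p o y gf by auto
      then show ?thesis using XS by (intro bexI[of _ "{x,y}"]) auto
    next
      case (SS c S f)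
      show ?thesis
      proof (cases "y = c")
        case True
        obtain s where "s \<in> S" using o SS by auto
        then show ?thesis using True SS by (intro bexI[of _ "{c,s}"]) auto
      next
        case False
        then obtain s where "s \<in> S" "y = f s" using o SS p y gf by auto
        then show ?thesis using SS by (intro bexI[of _ "{s,f s}"]) auto
      qed
    qed
    then have "{e \<in> ?EH. y \<in> e} \<noteq> {}" using p by auto
    moreover have "finite {e \<in> ?EH. y \<in> e}"
      using gf(2) peE okP by (rule_tac finite_subset[of _ E]) auto
    ultimately show "degree ?EH y \<ge> 1" unfolding degree_def
      by (simp add: Suc_le_eq card_gt_0_iff)
  qed
  show "\<forall>v\<in>?VH.
      (\<exists>c\<in>X. \<exists>m\<ge>2. star_with_center (comp_verts ?VH ?EH v) (comp_edges ?VH ?EH v) c m) \<or>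
      (\<exists>c\<in>Y. \<exists>m\<ge>2. subdivided_star_with_center (comp_verts ?VH ?EH v) (comp_edges ?VH ?EH v) c m)"
  proof
    fix v assume "v \<in> ?VH"
    then obtain p where p: "p \<in> P" "v \<in> pv p" by auto
    note cl = comp_lemma[OF disj p]
    have o: "ok E X Y p" and nbp: "\<not> bad p" using okP p nobad by auto
    show "(\<exists>c\<in>X. \<exists>m\<ge>2. star_with_center (comp_verts ?VH ?EH v) (comp_edges ?VH ?EH v) c m) \<or>
      (\<exists>c\<in>Y. \<exists>m\<ge>2. subdivided_star_with_center (comp_verts ?VH ?EH v) (comp_edges ?VH ?EH v) c m)"
    proof (cases p)
      case (XS x L)
      have xL: "x \<notin> L" using o XS gf by auto
      have "card L \<noteq> 1" using nbp XS by simp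
      moreover have "card L > 0" using o XS by (simp add: card_gt_0_iff)
      ultimately have cL: "card L \<ge> 2" by linarith
      have "star_with_center (pv p) (pe p) x (card L)"
        unfolding star_with_center_def using XS o xL by auto
      then show ?thesis unfolding cl using cL o XS
        by (intro disjI1 bexI[of _ x] exI[of _ "card L"]) auto
    next
      case (SS c S f)
      have facts: "c \<in> Y" "S \<subseteq> X" "S \<noteq> {}" "finite S" "inj_on f S" "f ` S \<subseteq> Y" "c \<notin> f ` S"
        using o SS by auto
      show ?thesis
      proof (cases "card S \<ge> 2")
        case True
        have "subdivided_star_with_center (pv p) (pe p) c (card S)"
          unfolding subdivided_star_with_center_def
        proof (intro exI[of _ S] exI[of _ f] conjI)
          show "c \<notin> S" using facts gf by blast
          show "f ` S \<inter> (S \<union> {c}) = {}" using facts gf by blast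
          show "pv p = {c} \<union> S \<union> f ` S" using SS by simp
          show "pe p = {{c, s} |s. s \<in> S} \<union> {{s, f s} |s. s \<in> S}" using SS by simp
        qed (use facts in auto)
        then show ?thesis unfolding cl using True facts
          by (intro disjI2 bexI[of _ c] exI[of _ "card S"]) auto
      next
        case False
        have "card S > 0" using facts by (simp add: card_gt_0_iff)
        then have "card S = 1" using False by linarith
        then obtain s where S: "S = {s}" by (auto simp: card_Suc_eq)
        have ne: "c \<noteq> s" "c \<noteq> f s" "s \<noteq> f s" using facts S gf by auto
        have "pv p = {s, c, f s}" using SS S by auto
        moreover have "pe p = {{s,v} | v. v \<in> {s, c, f s} - {s}}"
        proof -
          have 1: "pe p = {{c,s},{s,f s}}" using SS S by auto
          have 2: "{s, c, f s} - {s} = {c, f s}" using ne by auto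
          have 3: "{{s,v} | v. v \<in> {c, f s}} = {{s,c},{s,f s}}" by blast
          show ?thesis unfolding 1 2 3 by (simp add: insert_commute)
        qed
        moreover have "card {s, c, f s} = 2 + 1" using ne by simp
        ultimately have "star_with_center (pv p) (pe p) s 2"
          unfolding star_with_center_def by simp
        then show ?thesis unfolding cl using facts S
          by (intro disjI1 bexI[of _ s] exI[of _ 2]) auto
      qed
    qed
  qed
qed


lemma replace:
  assumes c: "config E X Y P" and R: "R \<subseteq> P" and fN: "finite N" and okN: "\<forall>n\<in>N. ok E X Y n"
    and dN: "\<forall>n\<in>N. \<forall>m\<in>N. n \<noteq> m \<longrightarrow> pv n \<inter> pv m = {}"
    and sub: "\<forall>n\<in>N. pv n \<subseteq> \<Union>(pv ` R) \<union> U" and U: "\<forall>q\<in>P. pv q \<inter> U = {}"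
    and cov: "Y \<inter> \<Union>(pv ` R) \<subseteq> \<Union>(pv ` N)"
  shows "config E X Y (P - R \<union> N)" "nbad (P - R \<union> N) + nbad R \<le> nbad P + nbad N"
proof -
  have fP: "finite P" and okP: "\<forall>p\<in>P. ok E X Y p"
    and disj: "\<forall>p\<in>P. \<forall>q\<in>P. p \<noteq> q \<longrightarrow> pv p \<inter> pv q = {}" and covP: "Y \<subseteq> \<Union>(pv ` P)"
    using c by (auto simp: config_def)
  have mixed: "pv n \<inter> pv q = {}" if "n \<in> N" "q \<in> P - R" for n q
  proof -
    have qP: "q \<in> P" "q \<notin> R" using that by auto
    have "pv q \<inter> pv r = {}" if "r \<in> R" for r
    proof -
      have "q \<noteq> r" "r \<in> P" using qP that R by auto
      then show ?thesis using disj[rule_format, of q r] qP by simp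
    qed
    moreover have "pv q \<inter> U = {}" using U[rule_format, OF qP(1)] .
    moreover have "pv n \<subseteq> \<Union>(pv ` R) \<union> U" using sub[rule_format, OF \<open>n \<in> N\<close>] .
    ultimately show ?thesis by blast
  qed
  show "config E X Y (P - R \<union> N)"
    unfolding config_def
  proof (intro conjI)
    show "finite (P - R \<union> N)" using fP fN by simp
    show "\<forall>p\<in>P - R \<union> N. ok E X Y p" using okP okN by blast
    show "\<forall>p\<in>P - R \<union> N. \<forall>q\<in>P - R \<union> N. p \<noteq> q \<longrightarrow> pv p \<inter> pv q = {}"
    proof (intro ballI impI)
      fix p q assume pq: "p \<in> P - R \<union> N" "q \<in> P - R \<union> N" "p \<noteq> q"
      show "pv p \<inter> pv q = {}"
      proof (cases "p \<in> N")
        case True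
        show ?thesis
        proof (cases "q \<in> N")
          case True then show ?thesis using dN[rule_format, of p q] \<open>p \<in> N\<close> pq by simp
        next
          case False then have "q \<in> P - R" using pq by simp
          then show ?thesis using mixed[of p q] \<open>p \<in> N\<close> by simp
        qed
      next
        case False
        show ?thesis
        proof (cases "q \<in> N")
          case True 
          have "p \<in> P - R" using pq False by simp
          then show ?thesis using mixed[of q p] True by (simp add: Int_commute)
        next
          case F2: False then have "p \<in> P" "q \<in> P" using pq False by auto
          then show ?thesis using disj[rule_format, of p q] pq by simp
        qed
      qed
    qed
    show "Y \<subseteq> \<Union>(pv ` (P - R \<union> N))"
    proof
      fix y assume "y \<in> Y"
      then obtain q where q: "q \<in> P" "y \<in> pv q" using covP by blast
      show "y \<in> \<Union>(pv ` (P - R \<union> N))"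
      proof (cases "q \<in> R")
        case True then show ?thesis using cov q \<open>y \<in> Y\<close> by blast
      next
        case False then show ?thesis using q by blast
      qed
    qed
  qed
  have fR: "finite R" using R fP finite_subset by blast
  have "{p \<in> P - R \<union> N. bad p} \<subseteq> {p \<in> P - R. bad p} \<union> {p \<in> N. bad p}" by blast
  then have "nbad (P - R \<union> N) \<le> card ({p \<in> P - R. bad p} \<union> {p \<in> N. bad p})"
    unfolding nbad_def using fP fN by (intro card_mono) auto
  also have "\<dots> \<le> card {p \<in> P - R. bad p} + nbad N"
    unfolding nbad_def by (rule card_Un_le)
  finally have 1: "nbad (P - R \<union> N) \<le> card {p \<in> P - R. bad p} + nbad N" .
  have "{p \<in> P. bad p} = {p \<in> P - R. bad p} \<union> {p \<in> R. bad p}" using R by blast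
  then have "nbad P = card {p \<in> P - R. bad p} + nbad R"
    unfolding nbad_def using fP fR by (subst card_Un_disjoint[symmetric]) auto
  then show "nbad (P - R \<union> N) + nbad R \<le> nbad P + nbad N" using 1 by linarith
qed

lemma improve:
  assumes c: "config E X Y P" and R: "R \<subseteq> P" and K2: "XS x {y} \<in> R" and fN: "finite N"
    and okN: "\<forall>n\<in>N. ok E X Y n \<and> \<not> bad n"
    and dN: "\<forall>n\<in>N. \<forall>m\<in>N. n \<noteq> m \<longrightarrow> pv n \<inter> pv m = {}"
    and sub: "\<forall>n\<in>N. pv n \<subseteq> \<Union>(pv ` R)"
    and cov: "Y \<inter> \<Union>(pv ` R) \<subseteq> \<Union>(pv ` N)"
  shows "\<exists>P'. config E X Y P' \<and> nbad P' < nbad P"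
proof -
  have r: "config E X Y (P - R \<union> N)" "nbad (P - R \<union> N) + nbad R \<le> nbad P + nbad N"
    using replace[OF c R fN _ dN _ _ cov, of "{}"] okN sub by auto
  have "{p \<in> N. bad p} = {}" using okN by auto
  then have "nbad N = 0" unfolding nbad_def by (metis card.empty)
  moreover have "nbad R \<ge> 1"
  proof -
    have "finite R" using R c finite_subset unfolding config_def by blast
    then have "finite {p \<in> R. bad p}" by simp
    moreover have "XS x {y} \<in> {p \<in> R. bad p}" using K2 by simp
    ultimately have "card {p \<in> R. bad p} > 0" using card_gt_0_iff by blast
    then show ?thesis unfolding nbad_def by simp
  qed
  ultimately show ?thesis using r by (intro exI[of _ "P - R \<union> N"]) auto
qed


lemma star_lemma:
  assumes cg: "connected_graph V E" and bp: "bipartition V E X Y" and yY: "y \<in> Y"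
    and H: "\<forall>a. {y,a} \<in> E \<longrightarrow> (\<forall>b. {a,b} \<in> E \<longrightarrow> b = y)"
  shows "star_with_center V E y (card V - 1)"
proof -
  have g: "graph V E" using cg by (simp add: connected_graph_def)
  note gf = graph_facts[OF g bp]
  have yV: "y \<in> V" using yY gf by auto
  let ?N = "insert y {a. {y,a} \<in> E}"
  have reach: "w \<in> ?N" if "reachable E y w" for w
    using that unfolding reachable_def
  proof (induction rule: rtranclp_induct)
    case base then show ?case by simp
  next
    case (step a b)
    have ab: "{a,b} \<in> E" using step(2) by (simp add: adj_def)
    show ?case
    proof (cases "a = y")
      case True then show ?thesis using ab by simp
    next
      case False
      then have "{y,a} \<in> E" using step(3) by simp
      then have "b = y" using H ab by blast
      then show ?thesis by simp
    qed
  qed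
  have VN: "V \<subseteq> ?N"
  proof
    fix w assume "w \<in> V"
    then have "reachable E y w" using cg yV unfolding connected_graph_def by blast
    then show "w \<in> ?N" using reach by blast
  qed
  have EE: "E = {{y, v} |v. v \<in> V - {y}}"
  proof
    show "E \<subseteq> {{y, v} |v. v \<in> V - {y}}"
    proof
      fix e assume e: "e \<in> E"
      from g have "\<forall>e\<in>E. \<exists>u v. u \<noteq> v \<and> u \<in> V \<and> v \<in> V \<and> e = {u, v}"
        by (simp add: graph_def)
      then have "\<exists>u v. u \<noteq> v \<and> u \<in> V \<and> v \<in> V \<and> e = {u, v}" using e by (rule bspec)
      then obtain u v where uv: "u \<noteq> v" "u \<in> V" "v \<in> V" "e = {u,v}" by blast
      have "u \<in> ?N" using VN uv by blast
      show "e \<in> {{y, v} |v. v \<in> V - {y}}"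
      proof (cases "u = y")
        case True then show ?thesis using uv by blast
      next
        case False
        then have "{y,u} \<in> E" using \<open>u \<in> ?N\<close> by simp
        moreover have "{u,v} \<in> E" using e uv by simp
        ultimately have "v = y" using H by blast
        then have "e = {y,u}" using uv by (simp add: insert_commute)
        then show ?thesis using uv False by blast
      qed
    qed
    show "{{y, v} |v. v \<in> V - {y}} \<subseteq> E"
    proof
      fix e assume "e \<in> {{y, v} |v. v \<in> V - {y}}"
      then obtain v where v: "e = {y,v}" "v \<in> V" "v \<noteq> y" by blast
      then have "v \<in> ?N" using VN by blast
      then show "e \<in> E" using v by simp
    qed
  qed
  have "card V > 0" using gf yV card_gt_0_iff by blast
  then have "card V = (card V - 1) + 1" by simp
  then show ?thesis unfolding star_with_center_def using gf yV EE by blast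
qed

lemma init:
  assumes cg: "connected_graph V E" and bp: "bipartition V E X Y"
    and ns: "\<not> (\<exists>c\<in>Y. \<exists>m. star_with_center V E c m)"
  shows "\<exists>P. config E X Y P"
proof -
  have g: "graph V E" using cg by (simp add: connected_graph_def)
  note gf = graph_facts[OF g bp]
  have nb: "\<exists>x. {y,x} \<in> E" if "y \<in> Y" for y
  proof (rule ccontr)
    assume "\<nexists>x. {y, x} \<in> E"
    then have "star_with_center V E y (card V - 1)" using star_lemma[OF cg bp that] by blast
    then show False using ns that by blast
  qed
  define p where "p y = (SOME x. {y,x} \<in> E)" for y
  have pE: "{y, p y} \<in> E" if "y \<in> Y" for y
    unfolding p_def using someI_ex[OF nb[OF that]] .
  have pX: "p y \<in> X" if "y \<in> Y" for y
    using edge_XY(5)[OF g bp pE[OF that] that] .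
  have fY: "finite Y" using rev_finite_subset[OF gf(1) gf(4)] .
  define P where "P = (\<lambda>x. XS x {y\<in>Y. p y = x}) ` (p ` Y)"
  have "config E X Y P"
    unfolding config_def
  proof (intro conjI)
    show "finite P" unfolding P_def using fY by simp
    show "\<forall>q\<in>P. ok E X Y q"
    proof
      fix q assume "q \<in> P"
      then obtain y0 where y0: "y0 \<in> Y" "q = XS (p y0) {y\<in>Y. p y = p y0}" unfolding P_def by blast
      have "finite {y\<in>Y. p y = p y0}" using fY by simp
      moreover have "\<forall>l\<in>{y\<in>Y. p y = p y0}. {p y0, l} \<in> E"
      proof
        fix l assume l: "l \<in> {y\<in>Y. p y = p y0}"
        then have "{l, p l} \<in> E" using pE by blast
        then show "{p y0, l} \<in> E" using l by (simp add: insert_commute)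
      qed
      moreover have "{y\<in>Y. p y = p y0} \<noteq> {}" using y0 by blast
      moreover have "{y\<in>Y. p y = p y0} \<subseteq> Y" by blast
      ultimately show "ok E X Y q" using y0(2) pX[OF y0(1)] by simp
    qed
    show "\<forall>a\<in>P. \<forall>b\<in>P. a \<noteq> b \<longrightarrow> pv a \<inter> pv b = {}"
    proof (intro ballI impI)
      fix a b assume ab: "a \<in> P" "b \<in> P" "a \<noteq> b"
      then obtain ya yb where y: "ya \<in> Y" "a = XS (p ya) {y\<in>Y. p y = p ya}"
        "yb \<in> Y" "b = XS (p yb) {y\<in>Y. p y = p yb}" unfolding P_def by blast
      then have ne: "p ya \<noteq> p yb" using ab by auto
      have "p ya \<notin> Y" "p yb \<notin> Y" using pX y gf by auto
      then have 1: "p ya \<notin> {y\<in>Y. p y = p yb}" "p yb \<notin> {y\<in>Y. p y = p ya}" by auto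
      have 2: "{y\<in>Y. p y = p ya} \<inter> {y\<in>Y. p y = p yb} = {}" using ne by auto
      show "pv a \<inter> pv b = {}" unfolding y(2) y(4) pv.simps using 1 2 ne by blast
    qed
    show "Y \<subseteq> \<Union> (pv ` P)"
    proof
      fix y assume "y \<in> Y"
      then have "XS (p y) {z\<in>Y. p z = p y} \<in> P" unfolding P_def by blast
      then show "y \<in> \<Union> (pv ` P)" using \<open>y \<in> Y\<close> by force
    qed
  qed
  then show ?thesis by blast
qed


lemma moveA:
  assumes g: "graph V E" and bp: "bipartition V E X Y" and c: "config E X Y P"
    and K2: "XS x {y} \<in> P" and e: "{x,y'} \<in> E" and yy: "y' \<noteq> y"
  shows "\<exists>P'. config E X Y P' \<and> nbad P' < nbad P"
proof -
  note gf = graph_facts[OF g bp]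
  have fP: "finite P" and okP: "\<forall>p\<in>P. ok E X Y p"
    and disj: "\<forall>p\<in>P. \<forall>q\<in>P. p \<noteq> q \<longrightarrow> pv p \<inter> pv q = {}" and covP: "Y \<subseteq> \<Union>(pv ` P)"
    using c by (auto simp: config_def)
  have o2: "x \<in> X" "y \<in> Y" "{x,y} \<in> E" using okP K2 by auto
  have y'Y: "y' \<in> Y" using edge_XY(4)[OF g bp e o2(1)] .
  obtain K where K: "K \<in> P" "y' \<in> pv K" using covP y'Y by blast
  have XYd: "a \<notin> Y" if "a \<in> X" for a using that gf by blast
  have xy': "x \<noteq> y'" using XYd o2(1) y'Y by blast
  have KK: "K \<noteq> XS x {y}" using K yy xy' by auto
  have "pv K \<inter> pv (XS x {y}) = {}" using disj[rule_format, OF K(1) K2 KK] .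
  then have dK: "x \<notin> pv K" "y \<notin> pv K" by auto
  have okK: "ok E X Y K" using okP K by blast
  let ?R = "{XS x {y}, K}"
  have R: "?R \<subseteq> P" using K K2 by blast
  have K2R: "XS x {y} \<in> ?R" by simp
  have pvR: "\<Union>(pv ` ?R) = insert x (insert y (pv K))" by simp
  have okxyy: "ok E X Y (XS x {y,y'})" "\<not> bad (XS x {y,y'})"
    using o2 y'Y e yy by auto
  show ?thesis
  proof (cases K)
    case (XS x'' L)
    have oK: "x'' \<in> X" "L \<subseteq> Y" "L \<noteq> {}" "finite L" "\<forall>l\<in>L. {x'',l} \<in> E"
      using okK XS by auto
    have y'L: "y' \<in> L" using K XS XYd oK(1) y'Y by auto
    have xx: "x \<noteq> x''" "y \<notin> L" using dK XS by auto
    have xL: "x \<notin> L" "x'' \<notin> L" "y \<noteq> x''" using oK XYd o2 by auto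
    have x''Y: "x'' \<notin> Y" using XYd oK(1) .
    have "card L > 0" using oK by (simp add: card_gt_0_iff)
    then consider "card L = 1" | "card L = 2" | "card L \<ge> 3" by linarith
    then show ?thesis
    proof cases
      case 1
      then have L: "L = {y'}" using y'L by (metis card_1_singletonE singletonD)
      show ?thesis
      proof (rule improve[OF c R K2R, of "{XS x {y,y'}}"])
        show "\<forall>n\<in>{XS x {y,y'}}. ok E X Y n \<and> \<not> bad n" using okxyy by simp
        show "\<forall>n\<in>{XS x {y,y'}}. pv n \<subseteq> \<Union>(pv ` ?R)" unfolding pvR using XS L by auto
        show "Y \<inter> \<Union>(pv ` ?R) \<subseteq> \<Union>(pv ` {XS x {y,y'}})" unfolding pvR using XS L x''Y by auto
      qed auto
    next
      case 2
      then obtain y'' where L: "L = {y', y''}" "y'' \<noteq> y'" using y'L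
        by (metis card_2_iff insert_commute insertE singletonD)
      define f where "f = (\<lambda>z. if z = x then y else y'')"
      let ?n = "SS y' {x, x''} f"
      have y''Y: "y'' \<in> Y" "y \<noteq> y''" using L oK xx by auto
      have "ok E X Y ?n"
      proof -
        have "inj_on f {x, x''}" unfolding f_def using xx y''Y by (auto simp: inj_on_def)
        moreover have "f ` {x, x''} = {y, y''}" unfolding f_def using xx by auto
        moreover have "{y', x} \<in> E" using e by (simp add: insert_commute)
        moreover have "{y', x''} \<in> E" using oK L by (simp add: insert_commute)
        moreover have "{x'', y''} \<in> E" using oK L by simp
        moreover have "f x = y" "f x'' = y''" unfolding f_def using xx by auto
        ultimately show ?thesis unfolding ok.simps
        proof (intro conjI)
          assume im: "f ` {x, x''} = {y, y''}"
          show "f ` {x, x''} \<subseteq> Y" unfolding im using o2 y''Y by simp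
          show "y' \<notin> f ` {x, x''}" unfolding im using yy L by simp
        qed (use o2 oK y'Y xx e L in \<open>auto simp: insert_commute\<close>)
      qed
      moreover have "\<not> bad ?n" by simp
      ultimately have okn: "ok E X Y ?n \<and> \<not> bad ?n" by blast
      show ?thesis
      proof (rule improve[OF c R K2R, of "{?n}"])
        show "\<forall>n\<in>{?n}. ok E X Y n \<and> \<not> bad n" using okn by simp
        have im: "f ` {x, x''} = {y, y''}" unfolding f_def using xx by auto
        show "\<forall>n\<in>{?n}. pv n \<subseteq> \<Union>(pv ` ?R)" unfolding pvR using XS L by (simp only: pv.simps im ball_simps) auto
        have fx: "f x = y" "f x'' = y''" unfolding f_def using xx by auto
        show "Y \<inter> \<Union>(pv ` ?R) \<subseteq> \<Union>(pv ` {?n})" unfolding pvR using XS L x''Y fx by auto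
      qed auto
    next
      case 3
      let ?n = "XS x'' (L - {y'})"
      have cd: "card (L - {y'}) \<ge> 2" using 3 y'L oK(4) by (simp add: card_Diff_singleton)
      then have ne: "L - {y'} \<noteq> {}" by (metis card.empty not_numeral_le_zero)
      have "ok E X Y ?n" using oK ne by auto
      moreover have "\<not> bad ?n" using cd by simp
      moreover have "pv (XS x {y,y'}) \<inter> pv ?n = {}" using xx xL x''Y y'Y by auto
      moreover have "XS x {y,y'} \<noteq> ?n" using xx by simp
      ultimately have okn: "ok E X Y ?n \<and> \<not> bad ?n" and pd: "pv (XS x {y,y'}) \<inter> pv ?n = {}" and nn: "XS x {y,y'} \<noteq> ?n" by blast+
      have pd2: "pv ?n \<inter> pv (XS x {y,y'}) = {}" using pd by (simp add: Int_commute)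
      show ?thesis
      proof (rule improve[OF c R K2R, of "{XS x {y,y'}, ?n}"])
        show "\<forall>n\<in>{XS x {y,y'}, ?n}. ok E X Y n \<and> \<not> bad n" using okn okxyy by simp
        show "\<forall>n\<in>{XS x {y,y'}, ?n}. \<forall>m\<in>{XS x {y,y'}, ?n}. n \<noteq> m \<longrightarrow> pv n \<inter> pv m = {}" using pd pd2 by auto
        show "\<forall>n\<in>{XS x {y,y'}, ?n}. pv n \<subseteq> \<Union>(pv ` ?R)" unfolding pvR using XS y'L by auto
        show "Y \<inter> \<Union>(pv ` ?R) \<subseteq> \<Union>(pv ` {XS x {y,y'}, ?n})" unfolding pvR using XS xL oK by auto
      qed auto
    qed
  next
    case (SS c S f)
    have oK: "c \<in> Y" "S \<subseteq> X" "S \<noteq> {}" "finite S" "inj_on f S" "f ` S \<subseteq> Y" "c \<notin> f ` S"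
      "\<forall>s\<in>S. {c,s} \<in> E \<and> {s, f s} \<in> E"
      using okK SS by auto
    have xx: "x \<noteq> c" "x \<notin> S" "x \<notin> f ` S" "y \<noteq> c" "y \<notin> S" "y \<notin> f ` S" using dK SS by auto
    show ?thesis
    proof (cases "y' = c")
      case True
      define g where "g = (\<lambda>z. if z = x then y else f z)"
      let ?n = "SS c (insert x S) g"
      have gS: "g ` S = f ` S" unfolding g_def using xx by auto
      have gx: "g x = y" unfolding g_def by simp
      have gi: "g ` (insert x S) = insert y (f ` S)" by (simp only: image_insert gx gS)
      have "ok E X Y ?n"
      proof -
        have gs: "g s = f s" if "s \<in> S" for s unfolding g_def using xx that by auto
        have "inj_on g S = inj_on f S" by (rule inj_on_cong) (simp add: gs)
        then have "inj_on g S" using oK(5) by simp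
        moreover have "g x \<notin> g ` (S - {x})" using xx gx gS by simp
        ultimately have inj: "inj_on g (insert x S)" by simp
        have ed: "\<forall>s\<in>insert x S. {c,s} \<in> E \<and> {s, g s} \<in> E"
        proof
          fix s assume "s \<in> insert x S"
          then show "{c,s} \<in> E \<and> {s, g s} \<in> E"
          proof
            assume "s = x" then show ?thesis using e True o2(3) gx by (simp add: insert_commute)
          next
            assume "s \<in> S" then show ?thesis using oK(8) gs by simp
          qed
        qed
        have "c \<notin> insert y (f ` S)" using xx oK(7) by simp
        moreover have "insert y (f ` S) \<subseteq> Y" using o2 oK(6) by simp
        moreover have "insert x S \<subseteq> X" using o2 oK(2) by simp
        ultimately show ?thesis unfolding ok.simps gi using oK(1,4) inj ed by simp
      qed
      moreover have "\<not> bad ?n" by simp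
      ultimately have okn: "ok E X Y ?n \<and> \<not> bad ?n" by blast
      show ?thesis
      proof (rule improve[OF c R K2R, of "{?n}"])
        show "\<forall>n\<in>{?n}. ok E X Y n \<and> \<not> bad n" using okn by simp
        show "\<forall>n\<in>{?n}. pv n \<subseteq> \<Union>(pv ` ?R)" unfolding pvR using SS gi by auto
        show "Y \<inter> \<Union>(pv ` ?R) \<subseteq> \<Union>(pv ` {?n})" unfolding pvR using SS gi by auto
      qed auto
    next
      case False
      have "y' \<in> S \<union> f ` S" using K SS False by simp
      moreover have "y' \<notin> S" using XYd oK(2) y'Y by blast
      ultimately obtain s where s: "s \<in> S" "y' = f s" by blast
      show ?thesis
      proof (cases "card S \<ge> 2")
        case True
        let ?n = "SS c (S - {s}) f"
        have "card (S - {s}) = card S - 1" using oK(4) s(1) by (simp add: card_Diff_singleton)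
        then have "card (S - {s}) \<noteq> 0" using True by simp
        then have ne: "S - {s} \<noteq> {}" by (metis card.empty)
        have "ok E X Y ?n" using oK ne by (auto intro: inj_on_subset)
        moreover have "\<not> bad ?n" by simp
        moreover have fs: "f s \<notin> f ` (S - {s})" using oK(5) s(1) by (simp add: inj_on_image_set_diff)
        moreover have "pv (XS x {y,y'}) \<inter> pv ?n = {}" using xx s fs False XYd o2(1) y'Y oK(2) by auto
        ultimately have okn: "ok E X Y ?n \<and> \<not> bad ?n" and pd: "pv (XS x {y,y'}) \<inter> pv ?n = {}" and nn: "XS x {y,y'} \<noteq> ?n" by blast+
        have pd2: "pv ?n \<inter> pv (XS x {y,y'}) = {}" using pd by (simp add: Int_commute)
        show ?thesis
        proof (rule improve[OF c R K2R, of "{XS x {y,y'}, ?n}"])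
          show "\<forall>n\<in>{XS x {y,y'}, ?n}. ok E X Y n \<and> \<not> bad n" using okn okxyy by simp
          show "\<forall>n\<in>{XS x {y,y'}, ?n}. \<forall>m\<in>{XS x {y,y'}, ?n}. n \<noteq> m \<longrightarrow> pv n \<inter> pv m = {}" using pd pd2 by auto
          show "\<forall>n\<in>{XS x {y,y'}, ?n}. pv n \<subseteq> \<Union>(pv ` ?R)" unfolding pvR using SS s by auto
          show "Y \<inter> \<Union>(pv ` ?R) \<subseteq> \<Union>(pv ` {XS x {y,y'}, ?n})" unfolding pvR using SS s XYd oK(2) by auto
        qed auto
      next
        case F2: False
        have "card S > 0" using oK by (simp add: card_gt_0_iff)
        then have "card S = 1" using F2 by linarith
        then have S: "S = {s}" using s by (metis card_1_singletonE singletonD)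
        define h where "h = (\<lambda>z. if z = x then y else c)"
        let ?n = "SS y' {x, s} h"
        have xs: "x \<noteq> s" using xx s by blast
        have "ok E X Y ?n"
        proof -
          have "inj_on h {x, s}" unfolding h_def using xs xx by (auto simp: inj_on_def)
          moreover have "h ` {x, s} = {y, c}" unfolding h_def using xs by auto
          moreover have "{y', x} \<in> E" using e by (simp add: insert_commute)
          moreover have "{y', s} \<in> E" using oK(8) s by (simp add: insert_commute)
          moreover have "{s, c} \<in> E"
          proof -
            have "{c, s} \<in> E" using oK(8) s by blast
            then show ?thesis by (simp add: insert_commute)
          qed
          moreover have "y' \<noteq> c" using False .
          moreover have "h x = y" "h s = c" unfolding h_def using xs by auto
          ultimately show ?thesis unfolding ok.simps
          proof (intro conjI)
            assume im: "h ` {x, s} = {y, c}"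
            show "h ` {x, s} \<subseteq> Y" unfolding im using o2 oK(1) by simp
            show "y' \<notin> h ` {x, s}" unfolding im using yy False by simp
          qed (use o2 oK(2) s y'Y in \<open>auto simp: insert_commute\<close>)
        qed
        moreover have "\<not> bad ?n" by simp
        ultimately have okn: "ok E X Y ?n \<and> \<not> bad ?n" by blast
        show ?thesis
        proof (rule improve[OF c R K2R, of "{?n}"])
          show "\<forall>n\<in>{?n}. ok E X Y n \<and> \<not> bad n" using okn by simp
          have hx: "h x = y" "h s = c" unfolding h_def using xs by auto
          show "\<forall>n\<in>{?n}. pv n \<subseteq> \<Union>(pv ` ?R)" unfolding pvR using SS S s hx by auto
          show "Y \<inter> \<Union>(pv ` ?R) \<subseteq> \<Union>(pv ` {?n})" unfolding pvR using SS S s hx by auto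
        qed auto
      qed
    qed
  qed
qed


lemma moveB:
  assumes g: "graph V E" and bp: "bipartition V E X Y" and c: "config E X Y P"
    and K2: "XS x {y} \<in> P" and e: "{y,x'} \<in> E" and xx': "x' \<noteq> x"
    and K: "K \<in> P" "x' \<in> pv K"
  shows "\<exists>P'. config E X Y P' \<and> nbad P' < nbad P"
proof -
  note gf = graph_facts[OF g bp]
  have fP: "finite P" and okP: "\<forall>p\<in>P. ok E X Y p"
    and disj: "\<forall>p\<in>P. \<forall>q\<in>P. p \<noteq> q \<longrightarrow> pv p \<inter> pv q = {}" and covP: "Y \<subseteq> \<Union>(pv ` P)"
    using c by (auto simp: config_def)
  have o2: "x \<in> X" "y \<in> Y" "{x,y} \<in> E" using okP K2 by auto
  have x'X: "x' \<in> X" using edge_XY(5)[OF g bp e o2(2)] .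
  have XYd: "a \<notin> Y" if "a \<in> X" for a using that gf by blast
  have x'Y: "x' \<notin> Y" using XYd x'X .
  have xy': "x' \<noteq> y" using x'Y o2(2) by blast
  have KK: "K \<noteq> XS x {y}" using K xx' xy' by auto
  have "pv K \<inter> pv (XS x {y}) = {}" using disj[rule_format, OF K(1) K2 KK] .
  then have dK: "x \<notin> pv K" "y \<notin> pv K" by auto
  have okK: "ok E X Y K" using okP K by blast
  have e': "{x',y} \<in> E" using e by (simp add: insert_commute)
  let ?R = "{XS x {y}, K}"
  have R: "?R \<subseteq> P" using K K2 by blast
  have K2R: "XS x {y} \<in> ?R" by simp
  have pvR: "\<Union>(pv ` ?R) = insert x (insert y (pv K))" by simp
  have xY: "x \<notin> Y" using XYd o2(1) .
  show ?thesis
  proof (cases K)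
    case (XS x'' L)
    have oK: "x'' \<in> X" "L \<subseteq> Y" "L \<noteq> {}" "finite L" "\<forall>l\<in>L. {x'',l} \<in> E"
      using okK XS by auto
    have "x' \<notin> L" using oK(2) x'Y by blast
    then have x'': "x'' = x'" using K XS by simp
    have yL: "y \<notin> L" using dK XS by simp
    let ?n = "XS x' (insert y L)"
    have "card (insert y L) = Suc (card L)" using yL oK(4) by simp
    moreover have "card L > 0" using oK by (simp add: card_gt_0_iff)
    ultimately have "\<not> bad ?n" by simp
    moreover have "ok E X Y ?n" using oK x'' x'X o2 e' by simp
    ultimately have okn: "ok E X Y ?n \<and> \<not> bad ?n" by blast
    show ?thesis
    proof (rule improve[OF c R K2R, of "{?n}"])
      show "\<forall>n\<in>{?n}. ok E X Y n \<and> \<not> bad n" using okn by simp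
      show "\<forall>n\<in>{?n}. pv n \<subseteq> \<Union>(pv ` ?R)" unfolding pvR using XS x'' by auto
      show "Y \<inter> \<Union>(pv ` ?R) \<subseteq> \<Union>(pv ` {?n})" unfolding pvR using XS x'' xY by auto
    qed auto
  next
    case (SS c S f)
    have oK: "c \<in> Y" "S \<subseteq> X" "S \<noteq> {}" "finite S" "inj_on f S" "f ` S \<subseteq> Y" "c \<notin> f ` S"
      "\<forall>s\<in>S. {c,s} \<in> E \<and> {s, f s} \<in> E"
      using okK SS by auto
    have xx: "x \<noteq> c" "x \<notin> S" "x \<notin> f ` S" "y \<noteq> c" "y \<notin> S" "y \<notin> f ` S" using dK SS by auto
    have "x' \<noteq> c" using oK(1) x'Y by blast
    moreover have "x' \<notin> f ` S" using oK(6) x'Y by blast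
    ultimately have x'S: "x' \<in> S" using K SS by simp
    have fx'Y: "f x' \<in> Y" using oK(6) x'S by blast
    have fx'c: "f x' \<noteq> c" using oK(7) x'S by blast
    have yf: "y \<noteq> f x'" using xx x'S by blast
    have e2: "{x', f x'} \<in> E" "{c, x'} \<in> E" using oK(8) x'S by auto
    show ?thesis
    proof (cases "card S \<ge> 2")
      case True
      let ?n1 = "XS x' {y, f x'}"
      let ?n = "SS c (S - {x'}) f"
      have "card (S - {x'}) = card S - 1" using oK(4) x'S by (simp add: card_Diff_singleton)
      then have "card (S - {x'}) \<noteq> 0" using True by simp
      then have ne: "S - {x'} \<noteq> {}" by (metis card.empty)
      have ok1: "ok E X Y ?n1 \<and> \<not> bad ?n1" using x'X o2 fx'Y e' e2 yf by simp
      have "ok E X Y ?n" using oK ne by (auto intro: inj_on_subset)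
      moreover have "\<not> bad ?n" by simp
      ultimately have okn: "ok E X Y ?n \<and> \<not> bad ?n" by blast
      have fs: "f x' \<notin> f ` (S - {x'})" using oK(5) x'S by (simp add: inj_on_image_set_diff)
      have "f x' \<notin> S" using fx'Y oK(2) XYd by blast
      moreover have "x' \<notin> f ` (S - {x'})" using x'Y oK(6) by blast
      ultimately have pd: "pv ?n1 \<inter> pv ?n = {}"
        using fs \<open>x' \<noteq> c\<close> fx'c xx by auto
      have pd2: "pv ?n \<inter> pv ?n1 = {}" using pd by (simp add: Int_commute)
      show ?thesis
      proof (rule improve[OF c R K2R, of "{?n1, ?n}"])
        show "\<forall>n\<in>{?n1, ?n}. ok E X Y n \<and> \<not> bad n" using okn ok1 by simp
        show "\<forall>n\<in>{?n1, ?n}. \<forall>m\<in>{?n1, ?n}. n \<noteq> m \<longrightarrow> pv n \<inter> pv m = {}" using pd pd2 by auto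
        show "\<forall>n\<in>{?n1, ?n}. pv n \<subseteq> \<Union>(pv ` ?R)" unfolding pvR using SS x'S by auto
        have "S \<inter> Y = {}" using oK(2) XYd by blast
        then show "Y \<inter> \<Union>(pv ` ?R) \<subseteq> \<Union>(pv ` {?n1, ?n})" unfolding pvR using SS xY by auto
      qed auto
    next
      case F2: False
      have "card S > 0" using oK by (simp add: card_gt_0_iff)
      then have "card S = 1" using F2 by linarith
      then have S: "S = {x'}" using x'S by (metis card_1_singletonE singletonD)
      let ?n = "XS x' {y, c, f x'}"
      have "card {c, f x'} \<ge> 1" by (simp add: card_insert_if)
      moreover have "card {y, c, f x'} = Suc (card {c, f x'})" using xx yf by simp
      ultimately have "\<not> bad ?n" by simp
      moreover have "ok E X Y ?n" using x'X o2 oK(1) fx'Y e' e2 by (simp add: insert_commute)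
      ultimately have okn: "ok E X Y ?n \<and> \<not> bad ?n" by blast
      show ?thesis
      proof (rule improve[OF c R K2R, of "{?n}"])
        show "\<forall>n\<in>{?n}. ok E X Y n \<and> \<not> bad n" using okn by simp
        show "\<forall>n\<in>{?n}. pv n \<subseteq> \<Union>(pv ` ?R)" unfolding pvR using SS S by auto
        show "Y \<inter> \<Union>(pv ` ?R) \<subseteq> \<Union>(pv ` {?n})" unfolding pvR using SS S xY x'Y by auto
      qed auto
    qed
  qed
qed

lemma moveC:
  assumes g: "graph V E" and bp: "bipartition V E X Y" and c: "config E X Y P"
    and K2: "XS x {y} \<in> P" and e: "{y,x'} \<in> E" and nx: "x' \<notin> \<Union>(pv ` P)"
  shows "config E X Y (P - {XS x {y}} \<union> {XS x' {y}}) \<and> nbad (P - {XS x {y}} \<union> {XS x' {y}}) \<le> nbad P"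
proof -
  note gf = graph_facts[OF g bp]
  have okP: "\<forall>p\<in>P. ok E X Y p" using c by (auto simp: config_def)
  have o2: "x \<in> X" "y \<in> Y" "{x,y} \<in> E" using okP K2 by auto
  have x'X: "x' \<in> X" using edge_XY(5)[OF g bp e o2(2)] .
  have e': "{x',y} \<in> E" using e by (simp add: insert_commute)
  have xY: "x \<notin> Y" using gf o2(1) by blast
  have r: "config E X Y (P - {XS x {y}} \<union> {XS x' {y}})"
    "nbad (P - {XS x {y}} \<union> {XS x' {y}}) + nbad {XS x {y}} \<le> nbad P + nbad {XS x' {y}}"
  proof -
    have pre: "{XS x {y}} \<subseteq> P" "finite {XS x' {y}}" "\<forall>n\<in>{XS x' {y}}. ok E X Y n"
      "\<forall>n\<in>{XS x' {y}}. \<forall>m\<in>{XS x' {y}}. n \<noteq> m \<longrightarrow> pv n \<inter> pv m = {}"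
      "\<forall>n\<in>{XS x' {y}}. pv n \<subseteq> \<Union>(pv ` {XS x {y}}) \<union> {x'}"
      "\<forall>q\<in>P. pv q \<inter> {x'} = {}"
      "Y \<inter> \<Union>(pv ` {XS x {y}}) \<subseteq> \<Union>(pv ` {XS x' {y}})"
      using K2 x'X o2 e' nx xY by auto
    show "config E X Y (P - {XS x {y}} \<union> {XS x' {y}})"
      "nbad (P - {XS x {y}} \<union> {XS x' {y}}) + nbad {XS x {y}} \<le> nbad P + nbad {XS x' {y}}"
      using replace[OF c pre] by blast+
  qed
  have "{p \<in> {XS x {y}}. bad p} = {XS x {y}}" "{p \<in> {XS x' {y}}. bad p} = {XS x' {y}}" by auto
  then have n1: "nbad {XS x {y}} = 1" "nbad {XS x' {y}} = 1" unfolding nbad_def by simp_all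
  show ?thesis using r n1 by simp
qed

theorem mainTheorem4:
  fixes V X Y :: "'a set" and E :: "'a set set"
  assumes "connected_graph V E"
    and "card E \<ge> 2"
    and "bipartition V E X Y"
    and "\<not> (\<exists>c\<in>Y. \<exists>m. star_with_center V E c m)"
  shows "\<exists>VH EH. subgraph VH EH V E \<and>
           (\<forall>y\<in>Y. degree EH y \<ge> 1) \<and>
           (\<forall>v\<in>VH.
              (\<exists>c\<in>X. \<exists>m\<ge>2. star_with_center (comp_verts VH EH v) (comp_edges VH EH v) c m) \<or>
              (\<exists>c\<in>Y. \<exists>m\<ge>2. subdivided_star_with_center (comp_verts VH EH v) (comp_edges VH EH v) c m))"
proof -
  note cg = assms(1) and bp = assms(3)
  have g: "graph V E" using cg by (simp add: connected_graph_def)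
  obtain P0 where "config E X Y P0" using init[OF cg bp assms(4)] by blast
  then obtain P where c: "config E X Y P" and min: "\<forall>Q. config E X Y Q \<longrightarrow> nbad P \<le> nbad Q"
    using ex_has_least_nat[of "config E X Y" P0 nbad] by blast
  have noimp: "\<not> (\<exists>P'. config E X Y P' \<and> nbad P' < nbad P)" using min by (meson not_less)
  have "nbad P = 0"
  proof (rule ccontr)
    assume "nbad P \<noteq> 0"
    then have "{p \<in> P. bad p} \<noteq> {}" unfolding nbad_def by (metis card.empty)
    then obtain p where p: "p \<in> P" "bad p" by blast
    then obtain x L where pL: "p = XS x L" "card L = 1" by (cases p) auto
    then obtain y where "L = {y}" by (metis card_1_singletonE)
    then have K2: "XS x {y} \<in> P" using p pL by simp
    have okP: "\<forall>p\<in>P. ok E X Y p" using c by (auto simp: config_def)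
    have o2: "x \<in> X" "y \<in> Y" "{x,y} \<in> E" using okP K2 by auto
    have A: "y' = y" if "{x,y'} \<in> E" for y'
    proof (rule ccontr)
      assume "y' \<noteq> y"
      then show False using moveA[OF g bp c K2 that] noimp by blast
    qed
    have B: "x' \<notin> \<Union>(pv ` P)" if "{y,x'} \<in> E" "x' \<noteq> x" for x'
    proof
      assume "x' \<in> \<Union>(pv ` P)"
      then obtain K where "K \<in> P" "x' \<in> pv K" by blast
      then show False using moveB[OF g bp c K2 that] noimp by blast
    qed
    have C: "y' = y" if c1: "{y,x'} \<in> E" and c2: "x' \<noteq> x" and c3: "{x',y'} \<in> E" for x' y'
    proof (rule ccontr)
      assume ne: "y' \<noteq> y"
      let ?P1 = "P - {XS x {y}} \<union> {XS x' {y}}"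
      have m: "config E X Y ?P1 \<and> nbad ?P1 \<le> nbad P"
        using moveC[OF g bp c K2 c1 B[OF c1 c2]] .
      have "XS x' {y} \<in> ?P1" by simp
      then obtain P2 where "config E X Y P2" "nbad P2 < nbad ?P1"
        using moveA[OF g bp _ _ c3 ne] m by blast
      then show False using m noimp by (meson order.strict_trans2)
    qed
    have H: "\<forall>a. {y,a} \<in> E \<longrightarrow> (\<forall>b. {a,b} \<in> E \<longrightarrow> b = y)"
    proof (intro allI impI)
      fix a b assume ya: "{y,a} \<in> E" and ab: "{a,b} \<in> E"
      show "b = y"
      proof (cases "a = x")
        case True then show ?thesis using A ab by blast
      next
        case False then show ?thesis using C ya ab by blast
      qed
    qed
    show False using star_lemma[OF cg bp o2(2) H] assms(4) o2(2) by blast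
  qed
  then show ?thesis using final[OF g bp c] by blast
qed

end
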